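(* (1) If $A\in C^\alpha(\Sigma,\mathbb R)$ then $L(A)\in C^\alpha(\Sigma,\mathbb R)$. (2) The linear map $L:C^\alpha(\Sigma,\mathbb R)\to C^\alpha(\Sigma,\mathbb R)$ is continuous. (3) $\mathcal B\subset\ker L$. (4) $L$ induces a continuous linear map $C^\alpha/\mathcal B\to C^\alpha/\mathcal B^*$. (5) The linear map $L^*:C^\alpha(\Sigma,\mathbb R)\to C^\alpha(\Sigma,\mathbb R)$ is continuous and induces a continuous linear map $C^\alpha/\mathcal B^*\to C^\alpha/\mathcal B$ which is the inverse of the map induced by $L$; in particular $L^*(L(A))\in A+\mathcal B$ for every $A\in C^\alpha$.
   Context: $\Sigma=\{1,\dots,d\}^{\mathbb N}$ with metric $d(\omega,\nu)=\lambda^N$, $N=\min\{k:\omega_k\ne\nu_k\}$, $0<\lambda<1$; $C^\alpha(\Sigma,\mathbb R)$ with norm $\|F\|_\alpha=\sup|F|+\sup_{x\ne y}|F(x)-F(y)|/d(x,y)^\alpha$. $T$ denotes the shift on the first factor (points $x$), $\sigma$ the shift on the second factor (points $\omega$) of $\Sigma\times\Sigma$. For $u,v\in\Sigma$ let $\tau_u(v)=(u_0,v_0,v_1,\dots)$, and for $n\ge1$, $\tau^{(n)}_u(v)=(u_{n-1},\dots,u_1,u_0,v_0,v_1,\dots)$, $\tau^{(0)}_u=\mathrm{id}$. Fix $\bar x,\bar\omega\in\Sigma$. For $A\in C^\alpha$ define $L(A)=A^*$ by $A^*(\omega)=A(\tau_\omega\bar x)+\sum_{n\ge1}[A(\tau^{(n+1)}_\omega\bar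 x)-A(\tau^{(n)}_{\sigma\omega}\bar x)]$ (this is the dual potential: with $W_A(x,\omega)=\sum_{n\ge1}[A(\tau^{(n)}_\omega x)-A(\tau^{(n)}_\omega\bar x)]$ one has $A^*(\omega)=A(\tau_\omega x)+W_A(\tau_\omega x,\sigma\omega)-W_A(x,\omega)$ for all $x$). For $\psi\in C^\alpha$ define $L^*(\psi)(x)=\psi(\tau_x\bar\omega)+\sum_{n\ge1}[\psi(\tau^{(n+1)}_x\bar\omega)-\psi(\tau^{(n)}_{Tx}\bar\omega)]$. $\mathcal B=\{u\circ T-u:u\in C^\alpha\}$ and $\mathcal B^*=\{u\circ\sigma-u:u\in C^\alpha\}$ (closed subspaces of $C^\alpha$), with quotient norms $[z+\mathcal B]_\alpha=\inf_{b\in\mathcal B}\|z+b\|_\alpha$. *)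

theory Defs
  imports "HOL-Analysis.Analysis"
begin

text \<open>The symbolic space Sigma = {1..d}^N is modelled as the type nat => 'a, where
  'a is an arbitrary finite (nonempty) alphabet of size d = CARD('a).
  Coordinates are indexed from 0.\<close>

definition sdist :: "real \<Rightarrow> (nat \<Rightarrow> 'a) \<Rightarrow> (nat \<Rightarrow> 'a) \<Rightarrow> real" where
  "sdist lam x y = (if x = y then 0 else lam ^ (LEAST k. x k \<noteq> y k))"

text \<open>The shift (T on the first factor, sigma on the second factor; both are the shift on Sigma).\<close>
definition shift :: "(nat \<Rightarrow> 'a) \<Rightarrow> (nat \<Rightarrow> 'a)" where
  "shift x = (\<lambda>k. x (Suc k))"

text \<open>tau n u v = (u_{n-1},...,u_0,v_0,v_1,...); tau 0 u = id, tau 1 u = tau_u.\<close>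
definition tau :: "nat \<Rightarrow> (nat \<Rightarrow> 'a) \<Rightarrow> (nat \<Rightarrow> 'a) \<Rightarrow> (nat \<Rightarrow> 'a)" where
  "tau n u v = (\<lambda>k. if k < n then u (n - 1 - k) else v (k - n))"

definition holder_quot_set :: "real \<Rightarrow> real \<Rightarrow> ((nat \<Rightarrow> 'a) \<Rightarrow> real) \<Rightarrow> real set" where
  "holder_quot_set lam al F =
     {\<bar>F x - F y\<bar> / (sdist lam x y powr al) | x y. x \<noteq> y}"

definition holder_space :: "real \<Rightarrow> real \<Rightarrow> ((nat \<Rightarrow> 'a) \<Rightarrow> real) set" where
  "holder_space lam al =
     {F. bounded (range F) \<and> bdd_above (holder_quot_set lam al F)}"

text \<open>||F||_alpha = sup |F| + Hoelder constant (0 is inserted only to make the sup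
  well-defined when there are no pairs x ~= y; all quantities are nonnegative).\<close>
definition holder_norm :: "real \<Rightarrow> real \<Rightarrow> ((nat \<Rightarrow> 'a) \<Rightarrow> real) \<Rightarrow> real" where
  "holder_norm lam al F =
     Sup (range (\<lambda>x. \<bar>F x\<bar>)) + Sup (insert 0 (holder_quot_set lam al F))"

text \<open>B = {u o T - u : u in C^alpha} (and B* = {u o sigma - u}, the same set of functions on Sigma).\<close>
definition coboundaries :: "real \<Rightarrow> real \<Rightarrow> ((nat \<Rightarrow> 'a) \<Rightarrow> real) set" where
  "coboundaries lam al = {(\<lambda>x. u (shift x) - u x) | u. u \<in> holder_space lam al}"

definition quot_norm ::
  "real \<Rightarrow> real \<Rightarrow> ((nat \<Rightarrow> 'a) \<Rightarrow> real) set \<Rightarrow> ((nat \<Rightarrow> 'a) \<Rightarrow> real) \<Rightarrow> real" where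
  "quot_norm lam al Bs z = Inf {holder_norm lam al (\<lambda>x. z x + b x) | b. b \<in> Bs}"

text \<open>The dual-potential operator with base point p:
  dual_op p A w = A(tau_w p) + sum_{n>=1} [A(tau^{(n+1)}_w p) - A(tau^{(n)}_{shift w} p)].
  L = dual_op xbar, L* = dual_op wbar.\<close>
definition dual_op :: "(nat \<Rightarrow> 'a) \<Rightarrow> ((nat \<Rightarrow> 'a) \<Rightarrow> real) \<Rightarrow> ((nat \<Rightarrow> 'a) \<Rightarrow> real)" where
  "dual_op p A = (\<lambda>w. A (tau 1 w p) +
      (\<Sum>n. A (tau (Suc n + 1) w p) - A (tau (Suc n) (shift w) p)))"

end

theory Submission
  imports Defs
begin


definition agree :: "nat \<Rightarrow> (nat \<Rightarrow> 'a) \<Rightarrow> (nat \<Rightarrow> 'a) \<Rightarrow> bool" where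
  "agree n x y \<longleftrightarrow> (\<forall>k<n. x k = y k)"

definition hol :: "real \<Rightarrow> real \<Rightarrow> ((nat \<Rightarrow> 'a) \<Rightarrow> real) \<Rightarrow> real" where
  "hol lam al F = Sup (insert 0 (holder_quot_set lam al F))"

definition supn :: "((nat \<Rightarrow> 'a) \<Rightarrow> real) \<Rightarrow> real" where
  "supn F = Sup (range (\<lambda>x. \<bar>F x\<bar>))"

lemma holder_norm_eq: "holder_norm lam al F = supn F + hol lam al F"
  by (simp add: holder_norm_def supn_def hol_def)

lemma powr_pow_eq: "0 < (lam::real) \<Longrightarrow> (lam ^ n) powr al = (lam powr al) ^ n"
proof -
  assume l: "0 < lam"
  have "lam ^ n = lam powr real n" using l by (simp add: powr_realpow)
  hence "(lam ^ n) powr al = lam powr (real n * al)" by (simp add: powr_powr)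
  also have "\<dots> = (lam powr al) ^ n" using l by (simp add: powr_power)
  finally show ?thesis .
qed

lemma sdist_eq:
  assumes "x \<noteq> y"
  shows "agree (LEAST k. x k \<noteq> y k) x y \<and> sdist lam x y = lam ^ (LEAST k. x k \<noteq> y k)"
  using assms not_less_Least unfolding agree_def sdist_def by auto

lemma sdist_agree:
  assumes "0 < lam" "lam < 1" "agree n x y"
  shows "sdist lam x y \<le> lam ^ n"
proof (cases "x = y")
  case True thus ?thesis using assms by (simp add: sdist_def)
next
  case False
  then obtain k where k: "x k \<noteq> y k" by auto
  have "x (LEAST k. x k \<noteq> y k) \<noteq> y (LEAST k. x k \<noteq> y k)" by (rule LeastI[of _ k]) (rule k)
  hence "n \<le> (LEAST k. x k \<noteq> y k)" using assms(3) unfolding agree_def by (meson not_le)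
  thus ?thesis using False assms by (simp add: sdist_def power_decreasing)
qed

lemma tail_bound:
  fixes f :: "nat \<Rightarrow> real"
  assumes r: "0 \<le> r" "r < 1" and c: "0 \<le> c" and b: "\<And>n. \<bar>f n\<bar> \<le> (if m \<le> n then c * r^n else 0)"
  shows "summable f \<and> \<bar>suminf f\<bar> \<le> c * r^m / (1 - r)"
proof -
  have g: "summable (\<lambda>n. c * r^n)" using r by (simp add: summable_geometric summable_mult)
  have b2: "\<bar>f n\<bar> \<le> c * r^n" for n using b[of n] r c by (auto split: if_splits)
  have sf: "summable f"
    by (rule summable_comparison_test[OF _ g]) (use b2 in auto)
  have z: "(\<Sum>i<m. f i) = 0"
  proof (intro sum.neutral ballI)
    fix i assume "i \<in> {..<m}"
    hence "\<bar>f i\<bar> \<le> 0" using b[of i] by simp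
    thus "f i = 0" by simp
  qed
  have e: "suminf f = (\<Sum>n. f (n + m))" using suminf_split_initial_segment[OF sf, of m] z by simp
  have sg: "summable (\<lambda>n. f (n + m))" using sf by (rule summable_ignore_initial_segment)
  have g2: "summable (\<lambda>n. c * r^m * r^n)" using r by (simp add: summable_geometric summable_mult)
  have bb: "\<bar>f (n + m)\<bar> \<le> c * r^m * r^n" for n using b[of "n+m"] by (simp add: power_add mult_ac)
  have s1: "(\<Sum>n. f (n + m)) \<le> (\<Sum>n. c * r^m * r^n)"
    by (rule suminf_le[OF _ sg g2]) (use bb in \<open>auto simp: abs_le_iff\<close>)
  have s2: "(\<Sum>n. - (c * r^m * r^n)) \<le> (\<Sum>n. f (n + m))"
  proof (rule suminf_le[OF _ _ sg])
    show "- (c * r ^ m * r ^ n) \<le> f (n + m)" for n using bb[of n] by (simp add: abs_le_iff)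
    show "summable (\<lambda>n. - (c * r ^ m * r ^ n))" using g2 by (rule summable_minus)
  qed
  have gv: "(\<Sum>n. c * r^m * r^n) = c * r^m / (1 - r)"
    using r by (simp add: suminf_mult suminf_geometric)
  have gv2: "(\<Sum>n. - (c * r^m * r^n)) = - (c * r^m / (1 - r))"
    using gv suminf_minus[OF g2] by simp
  show ?thesis using sf e s1 s2 gv gv2 by (simp add: abs_le_iff)
qed

lemma hol_nonneg:
  assumes "F \<in> holder_space lam al"
  shows "0 \<le> hol lam al F"
  using assms unfolding hol_def holder_space_def
  by (intro cSup_upper) auto

lemma holder_supn:
  assumes "F \<in> holder_space lam al"
  shows "\<bar>F x\<bar> \<le> supn F"
proof -
  from assms have "bounded (range F)" by (simp add: holder_space_def)
  then obtain a where "\<forall>y\<in>range F. norm y \<le> a" by (auto simp: bounded_iff)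
  hence "bdd_above (range (\<lambda>x. \<bar>F x\<bar>))" by (auto intro!: bdd_aboveI)
  thus ?thesis unfolding supn_def by (intro cSUP_upper) auto
qed

lemma holder_bound:
  assumes l: "0 < lam" "lam < 1" and a: "0 < al" and F: "F \<in> holder_space lam al" and ag: "agree n x y"
  shows "\<bar>F x - F y\<bar> \<le> hol lam al F * (lam powr al) ^ n"
proof (cases "x = y")
  case True thus ?thesis using hol_nonneg[OF F] l by simp
next
  case False
  have sp: "0 < sdist lam x y" using False l by (simp add: sdist_def)
  let ?q = "\<bar>F x - F y\<bar> / (sdist lam x y powr al)"
  have "?q \<in> holder_quot_set lam al F" using False unfolding holder_quot_set_def by blast
  hence "?q \<le> hol lam al F" using F unfolding hol_def holder_space_def
    by (intro cSup_upper) auto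
  hence "\<bar>F x - F y\<bar> \<le> hol lam al F * sdist lam x y powr al"
    using sp by (simp add: divide_le_eq)
  also have "\<dots> \<le> hol lam al F * (lam ^ n) powr al"
    using sdist_agree[OF l ag] sp a hol_nonneg[OF F]
    by (intro mult_left_mono powr_mono2) auto
  finally show ?thesis using l by (simp add: powr_pow_eq)
qed

lemma holder_intro:
  assumes l: "0 < lam" "lam < 1" and a: "0 < al"
    and b1: "\<And>x. \<bar>F x\<bar> \<le> B1" and b2: "0 \<le> B2"
    and h: "\<And>n x y. agree n x y \<Longrightarrow> \<bar>F x - F y\<bar> \<le> B2 * (lam powr al) ^ n"
  shows "F \<in> holder_space lam al \<and> holder_norm lam al F \<le> B1 + B2"
proof -
  have q: "v \<le> B2" if "v \<in> holder_quot_set lam al F" for v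
  proof -
    from that obtain x y where v: "v = \<bar>F x - F y\<bar> / (sdist lam x y powr al)" and xy: "x \<noteq> y"
      unfolding holder_quot_set_def by blast
    define k where "k = (LEAST k. x k \<noteq> y k)"
    have ag: "agree k x y" and sd: "sdist lam x y = lam ^ k" using sdist_eq[OF xy, of lam] k_def by auto
    have pos: "0 < (lam powr al) ^ k" using l by simp
    have "\<bar>F x - F y\<bar> \<le> B2 * (lam powr al) ^ k" by (rule h[OF ag])
    thus ?thesis using v sd pos l by (simp add: powr_pow_eq divide_le_eq)
  qed
  have bd: "bounded (range F)" using b1 by (auto simp: bounded_iff)
  have ba: "bdd_above (holder_quot_set lam al F)" using q by (auto intro!: bdd_aboveI)
  have s1: "supn F \<le> B1" unfolding supn_def by (intro cSUP_least) (auto intro: b1)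
  have s2: "hol lam al F \<le> B2" unfolding hol_def using q b2 by (intro cSup_least) auto
  show ?thesis using bd ba s1 s2 by (simp add: holder_space_def holder_norm_eq)
qed



lemma agree_0[simp]: "agree 0 x y" by (simp add: agree_def)

lemma agree_mono: "agree n x y \<Longrightarrow> m \<le> n \<Longrightarrow> agree m x y" by (simp add: agree_def)

lemma agree_shift: "agree (Suc n) x y \<Longrightarrow> agree n (shift x) (shift y)"
  by (simp add: agree_def shift_def)

lemma tau0[simp]: "tau 0 u v = v" by (simp add: tau_def)

lemma shift_tau: "shift (tau (Suc n) u v) = tau n u v"
  by (auto simp: shift_def tau_def fun_eq_iff Suc_diff_le)

lemma tau_agree_term: "agree (Suc n) (tau (Suc n + 1) w p) (tau (Suc n) (shift w) p)"
  by (auto simp: agree_def tau_def shift_def Suc_diff_le)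

lemma tau_eq_of_agree: "agree k w w' \<Longrightarrow> n \<le> k \<Longrightarrow> tau n w p = tau n w' p"
  by (auto simp: agree_def tau_def fun_eq_iff)

lemma agree_tau_tail: "agree m x y \<Longrightarrow> agree (n + m) (tau n u x) (tau n u y)"
  by (auto simp: agree_def tau_def)

lemma r_bounds: "0 < (lam::real) \<Longrightarrow> lam < 1 \<Longrightarrow> 0 < al \<Longrightarrow> 0 < lam powr al \<and> lam powr al < 1"
  by (simp add: powr01_less_one)

lemma holder_lin:
  fixes A B :: "(nat \<Rightarrow> 'a) \<Rightarrow> real"
  assumes l: "0 < lam" "lam < 1" and a: "0 < al"
    and A: "A \<in> holder_space lam al" and B: "B \<in> holder_space lam al"
  shows "(\<lambda>x. a * A x + b * B x) \<in> holder_space lam al"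
proof -
  let ?r = "lam powr al"
  have "(\<lambda>x. a * A x + b * B x) \<in> holder_space lam al \<and> holder_norm lam al (\<lambda>x. a * A x + b * B x)
     \<le> (\<bar>a\<bar> * supn A + \<bar>b\<bar> * supn B) + (\<bar>a\<bar> * hol lam al A + \<bar>b\<bar> * hol lam al B)"
  proof (rule holder_intro[OF l a])
    fix x
    have "\<bar>a * A x + b * B x\<bar> \<le> \<bar>a\<bar> * \<bar>A x\<bar> + \<bar>b\<bar> * \<bar>B x\<bar>" by (simp add: abs_mult abs_triangle_ineq[THEN order_trans])
    also have "\<dots> \<le> \<bar>a\<bar> * supn A + \<bar>b\<bar> * supn B"
      by (intro add_mono mult_left_mono holder_supn[OF A] holder_supn[OF B]) auto
    finally show "\<bar>a * A x + b * B x\<bar> \<le> \<bar>a\<bar> * supn A + \<bar>b\<bar> * supn B" .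
  next
    show "0 \<le> \<bar>a\<bar> * hol lam al A + \<bar>b\<bar> * hol lam al B"
      using hol_nonneg[OF A] hol_nonneg[OF B] by simp
  next
    fix n and x y :: "nat \<Rightarrow> 'a" assume ag: "agree n x y"
    have "\<bar>(a * A x + b * B x) - (a * A y + b * B y)\<bar> \<le> \<bar>a\<bar> * \<bar>A x - A y\<bar> + \<bar>b\<bar> * \<bar>B x - B y\<bar>"
    proof -
      have "(a * A x + b * B x) - (a * A y + b * B y) = a * (A x - A y) + b * (B x - B y)" by (simp add: algebra_simps)
      thus ?thesis by (simp add: abs_mult abs_triangle_ineq[THEN order_trans])
    qed
    also have "\<dots> \<le> \<bar>a\<bar> * (hol lam al A * ?r ^ n) + \<bar>b\<bar> * (hol lam al B * ?r ^ n)"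
      by (intro add_mono mult_left_mono holder_bound[OF l a A ag] holder_bound[OF l a B ag]) auto
    finally show "\<bar>(a * A x + b * B x) - (a * A y + b * B y)\<bar> \<le> (\<bar>a\<bar> * hol lam al A + \<bar>b\<bar> * hol lam al B) * ?r ^ n"
      by (simp add: algebra_simps)
  qed
  thus ?thesis by simp
qed

lemma holder_diff:
  assumes "0 < lam" "lam < 1" "0 < al" "A \<in> holder_space lam al" "B \<in> holder_space lam al"
  shows "(\<lambda>x. A x - B x) \<in> holder_space lam al"
  using holder_lin[OF assms, of 1 "-1"] by simp

lemma holder_add:
  assumes "0 < lam" "lam < 1" "0 < al" "A \<in> holder_space lam al" "B \<in> holder_space lam al"
  shows "(\<lambda>x. A x + B x) \<in> holder_space lam al"
  using holder_lin[OF assms, of 1 1] by simp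

lemma holder_zero:
  assumes l: "0 < lam" "lam < 1" and a: "0 < al"
  shows "(\<lambda>x::nat\<Rightarrow>'a. 0) \<in> holder_space lam al"
proof -
  have "(\<lambda>x::nat\<Rightarrow>'a. 0) \<in> holder_space lam al \<and> holder_norm lam al (\<lambda>x::nat\<Rightarrow>'a. 0) \<le> 0 + 0"
    by (rule holder_intro[OF l a]) auto
  thus ?thesis by simp
qed

lemma holder_shift:
  fixes u :: "(nat \<Rightarrow> 'a) \<Rightarrow> real"
  assumes l: "0 < lam" "lam < 1" and a: "0 < al" and u: "u \<in> holder_space lam al"
  shows "(\<lambda>x. u (shift x)) \<in> holder_space lam al"
proof -
  let ?r = "lam powr al"
  have r: "0 < ?r" "?r < 1" using r_bounds[OF l a] by auto
  have H: "0 \<le> hol lam al u" by (rule hol_nonneg[OF u])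
  have "(\<lambda>x. u (shift x)) \<in> holder_space lam al \<and> holder_norm lam al (\<lambda>x. u (shift x)) \<le> supn u + hol lam al u / ?r"
  proof (rule holder_intro[OF l a])
    show "\<bar>u (shift x)\<bar> \<le> supn u" for x by (rule holder_supn[OF u])
    show "0 \<le> hol lam al u / ?r" using H r by simp
    fix n and x y :: "nat \<Rightarrow> 'a" assume ag: "agree n x y"
    show "\<bar>u (shift x) - u (shift y)\<bar> \<le> hol lam al u / ?r * ?r ^ n"
    proof (cases n)
      case 0
      have "\<bar>u (shift x) - u (shift y)\<bar> \<le> hol lam al u * ?r ^ 0" by (rule holder_bound[OF l a u]) simp
      also have "\<dots> \<le> hol lam al u / ?r" using H r by (simp add: le_divide_eq mult_left_le)
      finally show ?thesis using 0 by simp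
    next
      case (Suc m)
      have "\<bar>u (shift x) - u (shift y)\<bar> \<le> hol lam al u * ?r ^ m"
        using ag Suc by (intro holder_bound[OF l a u] agree_shift) simp
      thus ?thesis using Suc r by simp
    qed
  qed
  thus ?thesis by simp
qed

lemma cob_holder:
  assumes l: "0 < lam" "lam < 1" and a: "0 < al" and b: "b \<in> coboundaries lam al"
  shows "b \<in> holder_space lam al"
  using b holder_diff[OF l a holder_shift[OF l a] ] unfolding coboundaries_def by blast



definition dterm :: "(nat \<Rightarrow> 'a) \<Rightarrow> ((nat \<Rightarrow> 'a) \<Rightarrow> real) \<Rightarrow> (nat \<Rightarrow> 'a) \<Rightarrow> nat \<Rightarrow> real" where
  "dterm p A w n = A (tau (Suc n + 1) w p) - A (tau (Suc n) (shift w) p)"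

lemma dual_op_alt: "dual_op p A w = A (tau 1 w p) + suminf (dterm p A w)"
  unfolding dual_op_def dterm_def[abs_def] by simp

lemma dterm_bound:
  assumes l: "0 < lam" "lam < 1" and a: "0 < al" and A: "A \<in> holder_space lam al"
  shows "\<bar>dterm p A w n\<bar> \<le> (hol lam al A * lam powr al) * (lam powr al) ^ n"
  using holder_bound[OF l a A tau_agree_term[of n w p]] by (simp add: dterm_def mult_ac)

lemma dterm_summable:
  assumes l: "0 < lam" "lam < 1" and a: "0 < al" and A: "A \<in> holder_space lam al"
  shows "summable (dterm p A w) \<and> \<bar>suminf (dterm p A w)\<bar> \<le> (hol lam al A * lam powr al) / (1 - lam powr al)"
proof -
  have r: "0 < lam powr al" "lam powr al < 1" using r_bounds[OF l a] by auto
  have "summable (dterm p A w) \<and> \<bar>suminf (dterm p A w)\<bar> \<le> (hol lam al A * lam powr al) * (lam powr al)^0 / (1 - lam powr al)"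
    by (rule tail_bound) (use r hol_nonneg[OF A] dterm_bound[OF l a A] in auto)
  thus ?thesis by simp
qed

definition Kc :: "real \<Rightarrow> real \<Rightarrow> real" where "Kc lam al = 1 + 3 / (1 - lam powr al)"

lemma Kc_pos: "0 < lam \<Longrightarrow> lam < 1 \<Longrightarrow> 0 < al \<Longrightarrow> 0 < Kc lam al"
  using r_bounds[of lam al] unfolding Kc_def by (simp add: add_pos_pos)

lemma dual_holder:
  fixes A :: "(nat \<Rightarrow> 'a) \<Rightarrow> real"
  assumes l: "0 < lam" "lam < 1" and a: "0 < al" and A: "A \<in> holder_space lam al"
  shows "dual_op p A \<in> holder_space lam al \<and> holder_norm lam al (dual_op p A) \<le> Kc lam al * holder_norm lam al A"
proof -
  define r where "r = lam powr al"
  define H where "H = hol lam al A"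
  define M where "M = supn A"
  have r: "0 < r" "r < 1" using r_bounds[OF l a] r_def by auto
  have H: "0 \<le> H" using hol_nonneg[OF A] H_def by simp
  have M: "0 \<le> M" using holder_supn[OF A] M_def by (meson abs_ge_zero order_trans)
  have hb: "\<And>n x y. agree n x y \<Longrightarrow> \<bar>A x - A y\<bar> \<le> H * r ^ n"
    using holder_bound[OF l a A] H_def r_def by simp
  have main: "dual_op p A \<in> holder_space lam al \<and> holder_norm lam al (dual_op p A) \<le>
      (M + H * r / (1 - r)) + H * (1 + 2 / (1 - r))"
  proof (rule holder_intro[OF l a])
    fix w
    have "\<bar>dual_op p A w\<bar> \<le> \<bar>A (tau 1 w p)\<bar> + \<bar>suminf (dterm p A w)\<bar>"
      by (simp add: dual_op_alt abs_triangle_ineq)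
    also have "\<dots> \<le> M + H * r / (1 - r)"
      using holder_supn[OF A] dterm_summable[OF l a A] M_def H_def r_def by (intro add_mono) auto
    finally show "\<bar>dual_op p A w\<bar> \<le> M + H * r / (1 - r)" .
  next
    show "0 \<le> H * (1 + 2 / (1 - r))" using H r by simp
  next
    fix k and w w' :: "nat \<Rightarrow> 'a" assume ag: "agree k w w'"
    have first: "\<bar>A (tau 1 w p) - A (tau 1 w' p)\<bar> \<le> H * r ^ k"
    proof (cases k)
      case 0 thus ?thesis using hb[of 0] by simp
    next
      case (Suc m)
      have "tau 1 w p = tau 1 w' p" using ag Suc by (intro tau_eq_of_agree) auto
      thus ?thesis using H r by simp
    qed
    define d where "d n = dterm p A w n - dterm p A w' n" for n
    have db: "\<bar>d n\<bar> \<le> (if k - 1 \<le> n then (2 * H * r) * r ^ n else 0)" for n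
    proof (cases "k - 1 \<le> n")
      case True
      have "\<bar>d n\<bar> \<le> \<bar>dterm p A w n\<bar> + \<bar>dterm p A w' n\<bar>" unfolding d_def by (rule abs_triangle_ineq4)
      also have "\<dots> \<le> H * r * r ^ n + H * r * r ^ n"
        using dterm_bound[OF l a A] H_def r_def by (intro add_mono) auto
      finally show ?thesis using True by simp
    next
      case False
      have e1: "tau (Suc n + 1) w p = tau (Suc n + 1) w' p" using ag False by (intro tau_eq_of_agree) auto
      have ag2: "agree (k - 1) (shift w) (shift w')"
        using ag False by (intro agree_shift) (simp add: Suc_diff_1 not_le)
      have e2: "tau (Suc n) (shift w) p = tau (Suc n) (shift w') p" using ag2 False by (intro tau_eq_of_agree) auto
      show ?thesis using False e1 e2 by (simp add: d_def dterm_def)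
    qed
    have tb: "summable d \<and> \<bar>suminf d\<bar> \<le> (2 * H * r) * r ^ (k - 1) / (1 - r)"
      by (rule tail_bound) (use r H db in auto)
    have rk: "r * r ^ (k - 1) \<le> r ^ k" using r by (cases k) auto
    have "(2 * H * r) * r ^ (k - 1) / (1 - r) \<le> 2 * H * r ^ k / (1 - r)"
      using rk r H by (intro divide_right_mono) (auto simp: mult_left_mono mult.assoc)
    with tb have sd: "\<bar>suminf d\<bar> \<le> 2 * H * r ^ k / (1 - r)" by linarith
    have sdeq: "suminf d = suminf (dterm p A w) - suminf (dterm p A w')"
      unfolding d_def using dterm_summable[OF l a A, of p w] dterm_summable[OF l a A, of p w']
      by (simp add: suminf_diff)
    have "\<bar>dual_op p A w - dual_op p A w'\<bar> = \<bar>(A (tau 1 w p) - A (tau 1 w' p)) + suminf d\<bar>"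
      by (simp add: dual_op_alt sdeq)
    also have "\<dots> \<le> H * r ^ k + 2 * H * r ^ k / (1 - r)"
      using first sd by (meson abs_triangle_ineq add_mono order_trans)
    also have "\<dots> = H * (1 + 2 / (1 - r)) * (lam powr al) ^ k" using r by (simp add: r_def field_simps)
    finally show "\<bar>dual_op p A w - dual_op p A w'\<bar> \<le> H * (1 + 2 / (1 - r)) * (lam powr al) ^ k" .
  qed
  have "(M + H * r / (1 - r)) + H * (1 + 2 / (1 - r)) \<le> Kc lam al * holder_norm lam al A"
  proof -
    define t where "t = 1 / (1 - r)"
    have t: "0 < t" using r t_def by simp
    have "H * r / (1 - r) = H * r * t" by (simp add: t_def)
    also have "\<dots> \<le> H * t" 
    proof -
      have "H * t * r \<le> H * t * 1" using H t r by (intro mult_left_mono) auto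
      thus ?thesis by (simp add: mult_ac)
    qed
    finally have 1: "H * r / (1 - r) \<le> H * t" .
    have 2: "H * (1 + 2 / (1 - r)) = H + 2 * H * t" by (simp add: t_def algebra_simps)
    have 3: "Kc lam al * holder_norm lam al A = (1 + 3 * t) * (M + H)"
      by (simp add: Kc_def t_def r_def holder_norm_eq M_def H_def)
    have 4: "0 \<le> M * t" using M t by simp
    show ?thesis using 1 2 3 4 by (simp add: algebra_simps)
  qed
  thus ?thesis using main by linarith
qed

lemma dterm_lin:
  "dterm p (\<lambda>x. a * A x + b * B x) w = (\<lambda>n. a * dterm p A w n + b * dterm p B w n)"
  by (simp add: dterm_def fun_eq_iff algebra_simps)

lemma dual_op_lin:
  assumes l: "0 < lam" "lam < 1" and a: "0 < al" and A: "A \<in> holder_space lam al" and B: "B \<in> holder_space lam al"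
  shows "dual_op p (\<lambda>x. a * A x + b * B x) = (\<lambda>w. a * dual_op p A w + b * dual_op p B w)"
proof
  fix w
  have sA: "summable (dterm p A w)" and sB: "summable (dterm p B w)"
    using dterm_summable[OF l a A] dterm_summable[OF l a B] by auto
  have "suminf (dterm p (\<lambda>x. a * A x + b * B x) w) = a * suminf (dterm p A w) + b * suminf (dterm p B w)"
    unfolding dterm_lin
    by (subst suminf_add[symmetric]) (auto simp: suminf_mult summable_mult sA sB)
  thus "dual_op p (\<lambda>x. a * A x + b * B x) w = a * dual_op p A w + b * dual_op p B w"
    by (simp add: dual_op_alt algebra_simps)
qed

lemma dual_op_diff:
  assumes l: "0 < lam" "lam < 1" and a: "0 < al" and A: "A \<in> holder_space lam al" and B: "B \<in> holder_space lam al"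
  shows "dual_op p (\<lambda>x. A x - B x) = (\<lambda>w. dual_op p A w - dual_op p B w)"
  using dual_op_lin[OF l a A B, of p 1 "-1"] by simp

lemma dual_op_add:
  assumes l: "0 < lam" "lam < 1" and a: "0 < al" and A: "A \<in> holder_space lam al" and B: "B \<in> holder_space lam al"
  shows "dual_op p (\<lambda>x. A x + B x) = (\<lambda>w. dual_op p A w + dual_op p B w)"
  using dual_op_lin[OF l a A B, of p 1 1] by simp



lemma tau_agree_shift: "agree N (tau (Suc N) w p) (tau N (shift w) p)"
  by (auto simp: agree_def tau_def shift_def Suc_diff_Suc)

lemma shift_tau1: "shift (tau 1 u v) = v" "shift (tau (Suc 0) u v) = v"
  using shift_tau[of 0 u v] by simp_all

lemma sq_tendsto:
  assumes l: "0 < lam" "lam < 1" and a: "0 < al" and f: "\<And>n. \<bar>f n\<bar> \<le> C * (lam powr al) ^ n"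
  shows "f \<longlonglongrightarrow> (0::real)"
proof (rule Lim_null_comparison)
  show "\<forall>\<^sub>F n in sequentially. norm (f n) \<le> C * (lam powr al) ^ n" using f by simp
  have "(\<lambda>n. (lam powr al) ^ n) \<longlonglongrightarrow> 0" using r_bounds[OF l a] by (intro LIMSEQ_power_zero) auto
  thus "(\<lambda>n. C * (lam powr al) ^ n) \<longlonglongrightarrow> 0" by (intro tendsto_mult_right_zero)
qed

lemma dual_cob:
  assumes l: "0 < lam" "lam < 1" and a: "0 < al" and u: "u \<in> holder_space lam al"
  shows "dual_op p (\<lambda>x. u (shift x) - u x) = (\<lambda>w. 0)"
proof
  fix w
  define b where "b = (\<lambda>x. u (shift x) - u x)"
  have ps: "(\<Sum>n<N. dterm p b w n) = u (tau N (shift w) p) - u (tau (Suc N) w p) - b (tau 1 w p)" for N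
  proof (induction N)
    case 0 thus ?case by (simp add: b_def shift_tau1)
  next
    case (Suc N)
    thus ?case by (simp add: dterm_def b_def shift_tau)
  qed
  have lim: "(\<lambda>N. u (tau N (shift w) p) - u (tau (Suc N) w p)) \<longlonglongrightarrow> 0"
  proof (rule sq_tendsto[OF l a])
    fix N
    show "\<bar>u (tau N (shift w) p) - u (tau (Suc N) w p)\<bar> \<le> hol lam al u * (lam powr al) ^ N"
      using holder_bound[OF l a u tau_agree_shift[of N w p]] by (simp add: abs_minus_commute)
  qed
  have "dterm p b w sums (0 - b (tau 1 w p))"
    unfolding sums_def ps by (intro tendsto_diff lim tendsto_const)
  hence "suminf (dterm p b w) = - b (tau 1 w p)" by (simp add: sums_iff)
  thus "dual_op p (\<lambda>x. u (shift x) - u x) w = 0" by (simp add: dual_op_alt b_def[symmetric])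
qed

definition Wf :: "(nat \<Rightarrow> 'a) \<Rightarrow> ((nat \<Rightarrow> 'a) \<Rightarrow> real) \<Rightarrow> (nat \<Rightarrow> 'a) \<Rightarrow> (nat \<Rightarrow> 'a) \<Rightarrow> real" where
  "Wf p A x w = suminf (\<lambda>n. A (tau (Suc n) w x) - A (tau (Suc n) w p))"

lemma Wterm_bound:
  assumes l: "0 < lam" "lam < 1" and a: "0 < al" and A: "A \<in> holder_space lam al"
  shows "\<bar>A (tau (Suc n) w x) - A (tau (Suc n) w p)\<bar> \<le> (hol lam al A * lam powr al) * (lam powr al) ^ n"
  using holder_bound[OF l a A agree_tau_tail[of 0 x p "Suc n" w]] by (simp add: mult_ac)

lemma W_summable:
  assumes l: "0 < lam" "lam < 1" and a: "0 < al" and A: "A \<in> holder_space lam al"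
  shows "summable (\<lambda>n. A (tau (Suc n) w x) - A (tau (Suc n) w p)) \<and>
    \<bar>Wf p A x w\<bar> \<le> (hol lam al A * lam powr al) * (lam powr al) ^ 0 / (1 - lam powr al)"
  unfolding Wf_def
  by (rule tail_bound) (use r_bounds[OF l a] hol_nonneg[OF A] Wterm_bound[OF l a A] in auto)

lemma W_close:
  assumes l: "0 < lam" "lam < 1" and a: "0 < al" and A: "A \<in> holder_space lam al" and ag: "agree m w w'"
  shows "\<bar>Wf p A y w - Wf p A y w'\<bar> \<le> (2 * hol lam al A * lam powr al) * (lam powr al) ^ m / (1 - lam powr al)"
proof -
  let ?r = "lam powr al" and ?H = "hol lam al A"
  define d where "d n = (A (tau (Suc n) w y) - A (tau (Suc n) w p)) - (A (tau (Suc n) w' y) - A (tau (Suc n) w' p))" for n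
  have db: "\<bar>d n\<bar> \<le> (if m \<le> n then (2 * ?H * ?r) * ?r ^ n else 0)" for n
  proof (cases "m \<le> n")
    case True
    have "\<bar>d n\<bar> \<le> \<bar>A (tau (Suc n) w y) - A (tau (Suc n) w p)\<bar> + \<bar>A (tau (Suc n) w' y) - A (tau (Suc n) w' p)\<bar>"
      unfolding d_def by (rule abs_triangle_ineq4)
    also have "\<dots> \<le> ?H * ?r * ?r ^ n + ?H * ?r * ?r ^ n"
      by (intro add_mono Wterm_bound[OF l a A])
    finally show ?thesis using True by (simp add: mult_ac)
  next
    case False
    have "tau (Suc n) w = tau (Suc n) w'" using ag False by (intro ext tau_eq_of_agree) auto
    thus ?thesis using False by (simp add: d_def)
  qed
  have tb: "summable d \<and> \<bar>suminf d\<bar> \<le> (2 * ?H * ?r) * ?r ^ m / (1 - ?r)"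
    by (rule tail_bound) (use r_bounds[OF l a] hol_nonneg[OF A] db in auto)
  have "suminf d = Wf p A y w - Wf p A y w'"
    unfolding d_def Wf_def using W_summable[OF l a A, of w y p] W_summable[OF l a A, of w' y p]
    by (simp add: suminf_diff)
  thus ?thesis using tb by simp
qed

lemma tau_comp: "tau (Suc n) (shift w) (tau (Suc 0) w x) = tau (Suc (Suc n)) w x"
  by (auto simp: tau_def shift_def fun_eq_iff Suc_diff_le)

lemma identity_a:
  assumes l: "0 < lam" "lam < 1" and a: "0 < al" and A: "A \<in> holder_space lam al"
  shows "dual_op p A w = A (tau 1 w x) + Wf p A (tau 1 w x) (shift w) - Wf p A x w"
proof -
  define e where "e n = A (tau (Suc n) w x) - A (tau (Suc n) w p)" for n
  define D where "D = suminf (dterm p A w)"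
  have sD: "dterm p A w sums D" using dterm_summable[OF l a A] D_def by (simp add: summable_sums)
  have e0: "e \<longlonglongrightarrow> 0"
    by (rule sq_tendsto[OF l a]) (use Wterm_bound[OF l a A] in \<open>simp add: e_def\<close>)
  have st: "(\<lambda>n. e (Suc n) - e n) sums (0 - e 0)" by (rule telescope_sums[OF e0])
  have se: "e sums Wf p A x w" unfolding e_def[abs_def] Wf_def
    using W_summable[OF l a A] by (simp add: summable_sums)
  have "(\<lambda>n. dterm p A w n + (e (Suc n) - e n) + e n) sums (D + (0 - e 0) + Wf p A x w)"
    by (intro sums_add sD st se)
  moreover have "(\<lambda>n. dterm p A w n + (e (Suc n) - e n) + e n) =
      (\<lambda>n. A (tau (Suc n) (shift w) (tau 1 w x)) - A (tau (Suc n) (shift w) p))"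
    by (simp add: fun_eq_iff tau_comp dterm_def e_def)
  ultimately have "Wf p A (tau 1 w x) (shift w) = D - e 0 + Wf p A x w"
    unfolding Wf_def by (simp add: sums_iff)
  thus ?thesis by (simp add: dual_op_alt D_def e_def)
qed



lemma W_holder:
  fixes A :: "(nat \<Rightarrow> 'a) \<Rightarrow> real"
  assumes l: "0 < lam" "lam < 1" and a: "0 < al" and A: "A \<in> holder_space lam al"
  shows "(\<lambda>y. - Wf p A y q) \<in> holder_space lam al"
proof -
  let ?r = "lam powr al" and ?H = "hol lam al A"
  have r: "0 < ?r" "?r < 1" using r_bounds[OF l a] by auto
  have H: "0 \<le> ?H" by (rule hol_nonneg[OF A])
  have "(\<lambda>y. - Wf p A y q) \<in> holder_space lam al \<and> holder_norm lam al (\<lambda>y. - Wf p A y q)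
      \<le> ?H * ?r / (1 - ?r) + ?H * ?r / (1 - ?r)"
  proof (rule holder_intro[OF l a])
    show "\<bar>- Wf p A y q\<bar> \<le> ?H * ?r / (1 - ?r)" for y using W_summable[OF l a A, of q y p] by simp
    show "0 \<le> ?H * ?r / (1 - ?r)" using H r by simp
    fix n and y y' :: "nat \<Rightarrow> 'a" assume ag: "agree n y y'"
    define d where "d k = (A (tau (Suc k) q y) - A (tau (Suc k) q p)) - (A (tau (Suc k) q y') - A (tau (Suc k) q p))" for k
    have db: "\<bar>d k\<bar> \<le> (if 0 \<le> k then (?H * ?r * ?r ^ n) * ?r ^ k else 0)" for k
    proof -
      have "\<bar>d k\<bar> = \<bar>A (tau (Suc k) q y) - A (tau (Suc k) q y')\<bar>" by (simp add: d_def)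
      also have "\<dots> \<le> ?H * ?r ^ (Suc k + n)" by (rule holder_bound[OF l a A agree_tau_tail[OF ag]])
      finally show ?thesis by (simp add: power_add mult_ac)
    qed
    have tb: "summable d \<and> \<bar>suminf d\<bar> \<le> (?H * ?r * ?r ^ n) * ?r ^ 0 / (1 - ?r)"
      by (rule tail_bound) (use r H db in auto)
    have "suminf d = Wf p A y q - Wf p A y' q"
      unfolding d_def Wf_def using W_summable[OF l a A, of q y p] W_summable[OF l a A, of q y' p]
      by (simp add: suminf_diff)
    thus "\<bar>- Wf p A y q - - Wf p A y' q\<bar> \<le> ?H * ?r / (1 - ?r) * ?r ^ n" using tb by (simp add: abs_minus_commute)
  qed
  thus ?thesis by simp
qed

definition sh :: "nat \<Rightarrow> (nat \<Rightarrow> 'a) \<Rightarrow> (nat \<Rightarrow> 'a)" where "sh m y = (\<lambda>k. y (k + m))"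

lemma sh_shift: "sh m (shift y) = sh (Suc m) y" by (simp add: sh_def shift_def fun_eq_iff)
lemma sh0: "sh 0 y = y" by (simp add: sh_def)
lemma sh1: "sh (Suc 0) y = shift y" by (simp add: sh_def shift_def)

lemma P1: "tau 1 (tau (Suc m) y q) (sh (Suc m) y) = sh m y"
  by (auto simp: tau_def sh_def fun_eq_iff)

lemma inverse:
  fixes A :: "(nat \<Rightarrow> 'a) \<Rightarrow> real"
  assumes l: "0 < lam" "lam < 1" and a: "0 < al" and A: "A \<in> holder_space lam al"
  shows "(\<lambda>x. dual_op q (dual_op p A) x - A x) \<in> coboundaries lam al"
proof -
  let ?r = "lam powr al" and ?H = "hol lam al A"
  define \<psi> where "\<psi> = dual_op p A"
  define av where "av y m = Wf p A (sh m y) (tau m y q)" for y m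
  have psi: "\<psi> (tau (Suc m) y q) = A (sh m y) + av y m - av y (Suc m)" for m y
    using identity_a[OF l a A, of p "tau (Suc m) y q" "sh (Suc m) y"]
    unfolding P1 shift_tau \<psi>_def av_def by simp
  have key: "dual_op q \<psi> x - A x = Wf p A x q - Wf p A (shift x) q" for x
  proof -
    define c where "c m = av x (Suc m) - av (shift x) m" for m
    have dt: "dterm q \<psi> x m = c m - c (Suc m)" for m
      using psi[of "Suc m" x] psi[of m "shift x"]
      by (simp add: dterm_def c_def sh_shift)
    have c0: "c \<longlonglongrightarrow> 0"
    proof (rule sq_tendsto[OF l a])
      fix m
      have "\<bar>c m\<bar> = \<bar>Wf p A (sh (Suc m) x) (tau (Suc m) x q) - Wf p A (sh (Suc m) x) (tau m (shift x) q)\<bar>"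
        by (simp add: c_def av_def sh_shift)
      also have "\<dots> \<le> (2 * ?H * ?r) * ?r ^ m / (1 - ?r)"
        by (rule W_close[OF l a A tau_agree_shift])
      finally show "\<bar>c m\<bar> \<le> ((2 * ?H * ?r) / (1 - ?r)) * ?r ^ m" by simp
    qed
    have "(\<lambda>n. c n - c (Suc n)) sums (c 0 - 0)" by (rule telescope_sums'[OF c0])
    moreover have "dterm q \<psi> x = (\<lambda>n. c n - c (Suc n))" using dt by (simp add: fun_eq_iff)
    ultimately have s: "suminf (dterm q \<psi> x) = c 0" by (simp add: sums_iff)
    have "\<psi> (tau 1 x q) = A x + av x 0 - av x (Suc 0)" using psi[of 0 x] by (simp add: sh0)
    thus ?thesis using s by (simp add: dual_op_alt c_def av_def sh0 sh1 sh_shift)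
  qed
  have "(\<lambda>x. dual_op q (dual_op p A) x - A x) = (\<lambda>x. (\<lambda>y. - Wf p A y q) (shift x) - (\<lambda>y. - Wf p A y q) x)"
    using key by (simp add: \<psi>_def fun_eq_iff)
  thus ?thesis unfolding coboundaries_def
    by (intro CollectI exI[of _ "\<lambda>y. - Wf p A y q"] conjI W_holder[OF l a A])
qed



lemma holder_norm_nonneg: "F \<in> holder_space lam al \<Longrightarrow> 0 \<le> holder_norm lam al F"
  using hol_nonneg[of F lam al] holder_supn[of F lam al] unfolding holder_norm_eq
  by (meson abs_ge_zero add_nonneg_nonneg order_trans)

lemma zero_cob:
  assumes l: "0 < lam" "lam < 1" and a: "0 < al"
  shows "(\<lambda>x::nat\<Rightarrow>'a. 0) \<in> coboundaries lam al"
  unfolding coboundaries_def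
  by (intro CollectI exI[of _ "\<lambda>x::nat\<Rightarrow>'a. 0"] conjI holder_zero[OF l a]) simp

lemma generic:
  fixes p :: "nat \<Rightarrow> 'a"
  assumes l: "0 < lam" "lam < 1" and a: "0 < al"
  shows "(\<forall>A \<in> holder_space lam al. dual_op p A \<in> holder_space lam al)
   \<and> (\<forall>A \<in> holder_space lam al. \<forall>A' \<in> holder_space lam al. \<forall>a b::real.
       dual_op p (\<lambda>x. a * A x + b * A' x) = (\<lambda>w. a * dual_op p A w + b * dual_op p A' w))
   \<and> (\<forall>A \<in> holder_space lam al. \<forall>\<epsilon>>0. \<exists>\<delta>>0. \<forall>A' \<in> holder_space lam al.
       holder_norm lam al (\<lambda>x. A' x - A x) < \<delta> \<longrightarrow>
       holder_norm lam al (\<lambda>x. (dual_op p A') x - (dual_op p A) x) < \<epsilon>)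
   \<and> (\<forall>b \<in> coboundaries lam al. dual_op p b = (\<lambda>x. 0))
   \<and> (\<forall>A \<in> holder_space lam al. \<forall>A' \<in> holder_space lam al.
       (\<lambda>x. A' x - A x) \<in> coboundaries lam al \<longrightarrow> (\<lambda>x. dual_op p A' x - dual_op p A x) \<in> coboundaries lam al)
   \<and> (\<forall>A \<in> holder_space lam al. \<forall>\<epsilon>>0. \<exists>\<delta>>0. \<forall>A' \<in> holder_space lam al.
       quot_norm lam al (coboundaries lam al) (\<lambda>x. A' x - A x) < \<delta> \<longrightarrow>
       quot_norm lam al (coboundaries lam al) (\<lambda>x. (dual_op p A') x - (dual_op p A) x) < \<epsilon>)"
proof -
  define K where "K = Kc lam al"
  have K: "0 < K" using Kc_pos[OF l a] K_def by simp
  have c4: "\<forall>b \<in> coboundaries lam al. dual_op p b = (\<lambda>x. 0)"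
    unfolding coboundaries_def using dual_cob[OF l a] by blast
  have c3: "\<forall>A \<in> holder_space lam al. \<forall>\<epsilon>>0. \<exists>\<delta>>0. \<forall>A' \<in> holder_space lam al.
       holder_norm lam al (\<lambda>x. A' x - A x) < \<delta> \<longrightarrow>
       holder_norm lam al (\<lambda>x. (dual_op p A') x - (dual_op p A) x) < \<epsilon>"
  proof (intro ballI allI impI)
    fix A :: "(nat \<Rightarrow> 'a) \<Rightarrow> real" and \<epsilon> :: real assume A: "A \<in> holder_space lam al" and e: "0 < \<epsilon>"
    show "\<exists>\<delta>>0. \<forall>A' \<in> holder_space lam al. holder_norm lam al (\<lambda>x. A' x - A x) < \<delta> \<longrightarrow>
       holder_norm lam al (\<lambda>x. (dual_op p A') x - (dual_op p A) x) < \<epsilon>"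
    proof (intro exI[of _ "\<epsilon> / K"] conjI ballI impI)
      show "0 < \<epsilon> / K" using e K by simp
      fix A' :: "(nat \<Rightarrow> 'a) \<Rightarrow> real" assume A': "A' \<in> holder_space lam al" and lt: "holder_norm lam al (\<lambda>x. A' x - A x) < \<epsilon> / K"
      have z: "(\<lambda>x. A' x - A x) \<in> holder_space lam al" by (rule holder_diff[OF l a A' A])
      have "holder_norm lam al (\<lambda>x. (dual_op p A') x - (dual_op p A) x) = holder_norm lam al (dual_op p (\<lambda>x. A' x - A x))"
        by (simp add: dual_op_diff[OF l a A' A])
      also have "\<dots> \<le> K * holder_norm lam al (\<lambda>x. A' x - A x)" using dual_holder[OF l a z] K_def by simp
      also have "\<dots> < K * (\<epsilon> / K)" using lt K by (rule mult_strict_left_mono)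
      finally show "holder_norm lam al (\<lambda>x. (dual_op p A') x - (dual_op p A) x) < \<epsilon>" using K by simp
    qed
  qed
  have c5: "\<forall>A \<in> holder_space lam al. \<forall>A' \<in> holder_space lam al.
       (\<lambda>x. A' x - A x) \<in> coboundaries lam al \<longrightarrow> (\<lambda>x. dual_op p A' x - dual_op p A x) \<in> coboundaries lam al"
  proof (intro ballI impI)
    fix A A' :: "(nat \<Rightarrow> 'a) \<Rightarrow> real" assume A: "A \<in> holder_space lam al" and A': "A' \<in> holder_space lam al"
      and c: "(\<lambda>x. A' x - A x) \<in> coboundaries lam al"
    have "(\<lambda>x. dual_op p A' x - dual_op p A x) = dual_op p (\<lambda>x. A' x - A x)"
      by (simp add: dual_op_diff[OF l a A' A])
    also have "\<dots> = (\<lambda>x. 0)" using c4 c by blast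
    finally show "(\<lambda>x. dual_op p A' x - dual_op p A x) \<in> coboundaries lam al" using zero_cob[OF l a] by simp
  qed
  have c6: "\<forall>A \<in> holder_space lam al. \<forall>\<epsilon>>0. \<exists>\<delta>>0. \<forall>A' \<in> holder_space lam al.
       quot_norm lam al (coboundaries lam al) (\<lambda>x. A' x - A x) < \<delta> \<longrightarrow>
       quot_norm lam al (coboundaries lam al) (\<lambda>x. (dual_op p A') x - (dual_op p A) x) < \<epsilon>"
  proof (intro ballI allI impI)
    fix A :: "(nat \<Rightarrow> 'a) \<Rightarrow> real" and \<epsilon> :: real assume A: "A \<in> holder_space lam al" and e: "0 < \<epsilon>"
    show "\<exists>\<delta>>0. \<forall>A' \<in> holder_space lam al. quot_norm lam al (coboundaries lam al) (\<lambda>x. A' x - A x) < \<delta> \<longrightarrow>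
       quot_norm lam al (coboundaries lam al) (\<lambda>x. (dual_op p A') x - (dual_op p A) x) < \<epsilon>"
    proof (intro exI[of _ "\<epsilon> / K"] conjI ballI impI)
      show "0 < \<epsilon> / K" using e K by simp
      fix A' :: "(nat \<Rightarrow> 'a) \<Rightarrow> real" assume A': "A' \<in> holder_space lam al"
        and lt: "quot_norm lam al (coboundaries lam al) (\<lambda>x. A' x - A x) < \<epsilon> / K"
      define z where "z = (\<lambda>x. A' x - A x)"
      have z: "z \<in> holder_space lam al" unfolding z_def by (rule holder_diff[OF l a A' A])
      have Lz: "(\<lambda>x. (dual_op p A') x - (dual_op p A) x) = dual_op p z"
        by (simp add: dual_op_diff[OF l a A' A] z_def)
      have Lzh: "dual_op p z \<in> holder_space lam al" using dual_holder[OF l a z] by simp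
      define S where "S = {holder_norm lam al (\<lambda>x. z x + b x) | b. b \<in> coboundaries lam al}"
      define S' where "S' = {holder_norm lam al (\<lambda>x. dual_op p z x + b x) | b. b \<in> coboundaries lam al}"
      have bd: "bdd_below S'" unfolding S'_def
      proof (rule bdd_belowI[of _ 0])
        fix v assume "v \<in> {holder_norm lam al (\<lambda>x. dual_op p z x + b x) | b. b \<in> coboundaries lam al}"
        then obtain b where v: "v = holder_norm lam al (\<lambda>x. dual_op p z x + b x)" and b: "b \<in> coboundaries lam al"
          by blast
        show "0 \<le> v" unfolding v by (rule holder_norm_nonneg[OF holder_add[OF l a Lzh cob_holder[OF l a b]]])
      qed
      have "holder_norm lam al (\<lambda>x. dual_op p z x + 0) \<in> S'"
        unfolding S'_def by (intro CollectI exI[of _ "\<lambda>x. 0"] conjI zero_cob[OF l a]) simp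
      hence q1: "quot_norm lam al (coboundaries lam al) (dual_op p z) \<le> holder_norm lam al (dual_op p z)"
        unfolding quot_norm_def S'_def[symmetric] using bd by (simp add: cInf_lower)
      have q2: "holder_norm lam al (dual_op p z) \<le> K * v" if "v \<in> S" for v
      proof -
        from that obtain b where v: "v = holder_norm lam al (\<lambda>x. z x + b x)" and b: "b \<in> coboundaries lam al"
          unfolding S_def by blast
        have bh: "b \<in> holder_space lam al" by (rule cob_holder[OF l a b])
        have zb: "(\<lambda>x. z x + b x) \<in> holder_space lam al" by (rule holder_add[OF l a z bh])
        have "dual_op p (\<lambda>x. z x + b x) = dual_op p z"
          using dual_op_add[OF l a z bh, of p] c4 b by simp
        thus ?thesis using dual_holder[OF l a zb, of p] v K_def by simp
      qed
      have ne: "S \<noteq> {}" unfolding S_def using zero_cob[OF l a] by blast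
      have "holder_norm lam al (dual_op p z) / K \<le> Inf S"
        by (rule cInf_greatest[OF ne]) (use q2 K in \<open>simp add: divide_le_eq mult.commute\<close>)
      hence "holder_norm lam al (dual_op p z) \<le> K * quot_norm lam al (coboundaries lam al) z"
        unfolding quot_norm_def S_def[symmetric] using K by (simp add: divide_le_eq mult.commute)
      also have "\<dots> < K * (\<epsilon> / K)" using lt K unfolding z_def by (rule mult_strict_left_mono)
      finally show "quot_norm lam al (coboundaries lam al) (\<lambda>x. (dual_op p A') x - (dual_op p A) x) < \<epsilon>"
        using q1 K Lz by simp
    qed
  qed
  show ?thesis using c3 c4 c5 c6 dual_holder[OF l a] dual_op_lin[OF l a] by blast
qed


theorem mainTheorem19:
  fixes lam al :: real and xbar wbar :: "nat \<Rightarrow> 'a::finite"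
  assumes "0 < lam" and "lam < 1" and "0 < al"
  shows "(\<forall>A \<in> holder_space lam al. dual_op xbar A \<in> holder_space lam al)
   \<and> (\<forall>A \<in> holder_space lam al. \<forall>A' \<in> holder_space lam al. \<forall>a b::real.
       dual_op xbar (\<lambda>x. a * A x + b * A' x) = (\<lambda>w. a * dual_op xbar A w + b * dual_op xbar A' w))
   \<and> (\<forall>A \<in> holder_space lam al. \<forall>\<epsilon>>0. \<exists>\<delta>>0. \<forall>A' \<in> holder_space lam al.
       holder_norm lam al (\<lambda>x. A' x - A x) < \<delta> \<longrightarrow>
       holder_norm lam al (\<lambda>x. (dual_op xbar A') x - (dual_op xbar A) x) < \<epsilon>)
   \<and> (\<forall>b \<in> coboundaries lam al. dual_op xbar b = (\<lambda>x. 0))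
   \<and> (\<forall>A \<in> holder_space lam al. \<forall>A' \<in> holder_space lam al.
       (\<lambda>x. A' x - A x) \<in> coboundaries lam al \<longrightarrow> (\<lambda>x. dual_op xbar A' x - dual_op xbar A x) \<in> coboundaries lam al)
   \<and> (\<forall>A \<in> holder_space lam al. \<forall>\<epsilon>>0. \<exists>\<delta>>0. \<forall>A' \<in> holder_space lam al.
       quot_norm lam al (coboundaries lam al) (\<lambda>x. A' x - A x) < \<delta> \<longrightarrow>
       quot_norm lam al (coboundaries lam al) (\<lambda>x. (dual_op xbar A') x - (dual_op xbar A) x) < \<epsilon>)
   \<and> (\<forall>\<psi> \<in> holder_space lam al. dual_op wbar \<psi> \<in> holder_space lam al)
   \<and> (\<forall>\<psi> \<in> holder_space lam al. \<forall>\<psi>' \<in> holder_space lam al. \<forall>a b::real.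
       dual_op wbar (\<lambda>x. a * \<psi> x + b * \<psi>' x) = (\<lambda>w. a * dual_op wbar \<psi> w + b * dual_op wbar \<psi>' w))
   \<and> (\<forall>\<psi> \<in> holder_space lam al. \<forall>\<epsilon>>0. \<exists>\<delta>>0. \<forall>\<psi>' \<in> holder_space lam al.
       holder_norm lam al (\<lambda>x. \<psi>' x - \<psi> x) < \<delta> \<longrightarrow>
       holder_norm lam al (\<lambda>x. (dual_op wbar \<psi>') x - (dual_op wbar \<psi>) x) < \<epsilon>)
   \<and> (\<forall>\<psi> \<in> holder_space lam al. \<forall>\<psi>' \<in> holder_space lam al.
       (\<lambda>x. \<psi>' x - \<psi> x) \<in> coboundaries lam al \<longrightarrow> (\<lambda>x. dual_op wbar \<psi>' x - dual_op wbar \<psi> x) \<in> coboundaries lam al)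
   \<and> (\<forall>\<psi> \<in> holder_space lam al. \<forall>\<epsilon>>0. \<exists>\<delta>>0. \<forall>\<psi>' \<in> holder_space lam al.
       quot_norm lam al (coboundaries lam al) (\<lambda>x. \<psi>' x - \<psi> x) < \<delta> \<longrightarrow>
       quot_norm lam al (coboundaries lam al) (\<lambda>x. (dual_op wbar \<psi>') x - (dual_op wbar \<psi>) x) < \<epsilon>)
   \<and> (\<forall>A \<in> holder_space lam al. (\<lambda>x. dual_op wbar (dual_op xbar A) x - A x) \<in> coboundaries lam al)
   \<and> (\<forall>\<psi> \<in> holder_space lam al. (\<lambda>x. dual_op xbar (dual_op wbar \<psi>) x - \<psi> x) \<in> coboundaries lam al)"
  proof -
  note g1 = generic[OF assms, of xbar] and g2 = generic[OF assms, of wbar]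
  have i1: "\<forall>A \<in> holder_space lam al. (\<lambda>x. dual_op wbar (dual_op xbar A) x - A x) \<in> coboundaries lam al"
    using inverse[OF assms] by blast
  have i2: "\<forall>\<psi> \<in> holder_space lam al. (\<lambda>x. dual_op xbar (dual_op wbar \<psi>) x - \<psi> x) \<in> coboundaries lam al"
    using inverse[OF assms] by blast
  show ?thesis using g1 g2 i1 i2
    apply -
    apply (elim conjE)
    apply (intro conjI)
    apply assumption+
    done
qed

end
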